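(* Let $(x_i,v_i)_{i=1}^N$ be differentiable functions of $t$ (on some time interval) with values in $\mathbb{R}^3$, satisfying $\dot x_i=v_i$ for all $i\in\{1,\dots,N\}$. Assume that, for all $i,j\in\{1,\dots,N\}$ and all times considered, $$\|x_i\|=1,\quad \langle v_i,x_i\rangle=0,\quad \|v_i\|\le\mathcal{V}_{max},\quad x_i+x_j\ne0.$$ Then, for a positive constant $C$ independent of $t$, $$\bigg\|\frac{d}{dt}\Big[\frac{1}{1+\langle x_i,x_j\rangle}(x_i\times x_j)(x_i\times x_j)^T\Big]\bigg\|\le\frac{C}{\|x_i+x_j\|}\mathcal{V}_{max}.$$
   Context: $\|\cdot\|$ is the Euclidean norm on vectors and the induced matrix norm on $3\times3$ matrices; $\times$ is the cross product; vectors are columns; $\mathcal{V}_{max}\ge0$ is a constant. *)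

theory Defs
  imports "HOL-Analysis.Analysis"
begin

definition outer3 :: "real^3 \<Rightarrow> real^3 \<Rightarrow> real^3^3" where
  "outer3 u w = (\<chi> a b. u $ a * w $ b)"

definition matnorm3 :: "real^3^3 \<Rightarrow> real" where
  "matnorm3 A = onorm (\<lambda>y. A *v y)"

definition Pmat :: "real^3 \<Rightarrow> real^3 \<Rightarrow> real^3^3" where
  "Pmat x y = (1 / (1 + x \<bullet> y)) *\<^sub>R outer3 (cross3 x y) (cross3 x y)"

end

theory Submission imports Defs
begin


lemma bilinear_outer3: "bilinear outer3"
  unfolding bilinear_def linear_iff outer3_def
  by (auto simp: vec_eq_iff algebra_simps)

lemma bb_outer3: "bounded_bilinear outer3"
  using bilinear_outer3 bilinear_conv_bounded_bilinear by blast

lemma bb_cross3: "bounded_bilinear cross3"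
  using bilinear_cross bilinear_conv_bounded_bilinear by blast

lemma outer3_mv: "outer3 u w *v y = (w \<bullet> y) *\<^sub>R u"
  unfolding outer3_def matrix_vector_mult_def inner_vec_def
  by (auto simp: vec_eq_iff sum_distrib_left algebra_simps)

lemma norm_cross_le: "norm (cross3 a b) \<le> norm a * norm b"
proof -
  have "(norm (cross3 a b))\<^sup>2 \<le> (norm a * norm b)\<^sup>2" using norm_cross_dot[of a b]
    by (metis le_add_same_cancel1 zero_le_power2)
  thus ?thesis by (rule power2_le_imp_le) simp
qed

lemma limpt_interval:
  fixes T :: "real set"
  assumes "is_interval T" "a < b" "a \<in> T" "b \<in> T" "t \<in> T"
  shows "at t within T \<noteq> bot"
proof -
  have "t islimpt T"
  proof (cases "t < b")
    case True
    have "{t..b} \<subseteq> T"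
      using mem_is_interval_1_I[OF assms(1) assms(5) assms(4)] by auto
    moreover have "t islimpt {t..b}" using True by (simp add: islimpt_Icc) 
    ultimately show ?thesis using islimpt_subset by blast
  next
    case False
    have "{a..t} \<subseteq> T"
      using mem_is_interval_1_I[OF assms(1) assms(3) assms(5)] by auto
    moreover have "t islimpt {a..t}" using False assms by (simp add: islimpt_Icc) 
    ultimately show ?thesis using islimpt_subset by blast
  qed
  thus ?thesis using trivial_limit_within by blast
qed

lemma key:
  fixes X Y :: "real \<Rightarrow> real^3"
  assumes dX: "(X has_vector_derivative VX) (at t within T)"
      and dY: "(Y has_vector_derivative VY) (at t within T)"
      and nx: "norm (X t) = 1" and ny: "norm (Y t) = 1"
      and ox: "VX \<bullet> X t = 0" and oy: "VY \<bullet> Y t = 0"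
      and bx: "norm VX \<le> V" and by': "norm VY \<le> V"
      and ne: "X t + Y t \<noteq> 0"
  shows "\<exists>D0. ((\<lambda>s. Pmat (X s) (Y s)) has_vector_derivative D0) (at t within T) \<and>
          matnorm3 D0 \<le> 16 / norm (X t + Y t) * V"
proof -
  define x y where "x = X t" and "y = Y t"
  define c where "c = x \<bullet> y"
  define c' where "c' = x \<bullet> VY + VX \<bullet> y"
  define w where "w = cross3 x y"
  define w' where "w' = cross3 x VY + cross3 VX y"
  define n where "n = norm (x + y)"
  have xx: "x \<bullet> x = 1" using nx x_def by (simp add: dot_square_norm)
  have yy: "y \<bullet> y = 1" using ny y_def by (simp add: dot_square_norm)
  have n2: "n\<^sup>2 = 2 + 2 * c"
    unfolding n_def c_def using xx yy
    by (simp add: power2_norm_eq_inner inner_add_left inner_add_right inner_commute)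
  have npos: "n > 0" using ne x_def y_def n_def by simp
  have cpos: "1 + c > 0" using n2 npos by (smt (verit) zero_less_power)
  have dc: "((\<lambda>s. X s \<bullet> Y s) has_vector_derivative c') (at t within T)"
    using bounded_bilinear.has_vector_derivative[OF bounded_bilinear_inner dX dY]
    by (simp add: c'_def x_def y_def)
  hence dc': "((\<lambda>s. 1 + X s \<bullet> Y s) has_field_derivative c') (at t within T)"
    by (auto intro!: derivative_eq_intros simp: has_real_derivative_iff_has_vector_derivative)
  have df: "((\<lambda>s. 1 / (1 + X s \<bullet> Y s)) has_field_derivative (- c' / (1 + c)\<^sup>2)) (at t within T)"
    using DERIV_inverse_fun[OF dc'] cpos unfolding c_def x_def y_def
    by (simp add: divide_inverse power2_eq_square)
  have dw: "((\<lambda>s. cross3 (X s) (Y s)) has_vector_derivative w') (at t within T)"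
    using bounded_bilinear.has_vector_derivative[OF bb_cross3 dX dY]
    by (simp add: w'_def x_def y_def)
  have dM: "((\<lambda>s. outer3 (cross3 (X s) (Y s)) (cross3 (X s) (Y s))) has_vector_derivative
       (outer3 w w' + outer3 w' w)) (at t within T)"
    using bounded_bilinear.has_vector_derivative[OF bb_outer3 dw dw]
    by (simp add: w_def x_def y_def)
  define D0 where "D0 = (1 / (1 + c)) *\<^sub>R (outer3 w w' + outer3 w' w) + (- c' / (1 + c)\<^sup>2) *\<^sub>R outer3 w w"
  have dP: "((\<lambda>s. Pmat (X s) (Y s)) has_vector_derivative D0) (at t within T)"
    unfolding Pmat_def D0_def
    using has_vector_derivative_scaleR[OF df dM]
    by (simp add: c_def x_def y_def w_def)
  have hc1: "\<bar>VX \<bullet> y\<bar> \<le> V * n"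
  proof -
    have "VX \<bullet> y = VX \<bullet> (x + y)" using ox x_def by (simp add: inner_add_right)
    also have "\<bar>\<dots>\<bar> \<le> norm VX * n" unfolding n_def by (rule Cauchy_Schwarz_ineq2)
    also have "\<dots> \<le> V * n" using bx npos by (simp add: mult_right_mono)
    finally show ?thesis .
  qed
  have hc2: "\<bar>x \<bullet> VY\<bar> \<le> V * n"
  proof -
    have "y \<bullet> VY = 0" using oy y_def by (simp add: inner_commute)
    hence "x \<bullet> VY = (x + y) \<bullet> VY" by (simp add: inner_add_left)
    also have "\<bar>\<dots>\<bar> \<le> n * norm VY" unfolding n_def by (rule Cauchy_Schwarz_ineq2)
    also have "\<dots> \<le> V * n" using by' npos by (simp add: mult_left_mono mult.commute)
    finally show ?thesis .
  qed
  have hc: "\<bar>c'\<bar> \<le> 2 * V * n" using hc1 hc2 unfolding c'_def by linarith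
  have w2: "(norm w)\<^sup>2 = (1 - c) * (1 + c)"
    using norm_cross_dot[of x y] nx ny unfolding w_def c_def x_def y_def by (simp add: algebra_simps power2_eq_square)
  have cle: "c \<le> 1" using Cauchy_Schwarz_ineq2[of x y] nx ny unfolding c_def x_def y_def by simp
  have wn: "norm w \<le> n"
  proof -
    have "(norm w)\<^sup>2 = (1 - c) * (1 + c)" by (rule w2)
    also have "\<dots> \<le> 2 * (1 + c)" using cpos cle by (intro mult_right_mono) auto
    also have "\<dots> = n\<^sup>2" using n2 by simp
    finally have "(norm w)\<^sup>2 \<le> n\<^sup>2" .
    thus ?thesis by (rule power2_le_imp_le) (use npos in simp)
  qed
  have wp: "norm w' \<le> 2 * V"
  proof -
    have "norm w' \<le> norm (cross3 x VY) + norm (cross3 VX y)" unfolding w'_def by (rule norm_triangle_ineq)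
    also have "\<dots> \<le> norm x * norm VY + norm VX * norm y" by (intro add_mono norm_cross_le)
    also have "\<dots> \<le> 2 * V" using nx ny bx by' x_def y_def by simp
    finally show ?thesis .
  qed
  have V0: "V \<ge> 0" using bx norm_ge_zero order_trans by blast
  have bound: "norm (D0 *v z) \<le> (16 / n * V) * norm z" for z
  proof -
    have "D0 *v z = (1 / (1 + c)) *\<^sub>R ((w' \<bullet> z) *\<^sub>R w + (w \<bullet> z) *\<^sub>R w') + (- c' / (1 + c)\<^sup>2 * (w \<bullet> z)) *\<^sub>R w"
      unfolding D0_def by (simp add: matrix_vector_mult_add_rdistrib matrix_vector_mult_diff_rdistrib scaleR_matrix_vector_assoc[symmetric] outer3_mv)
    also have "norm \<dots> \<le> norm ((1 / (1 + c)) *\<^sub>R ((w' \<bullet> z) *\<^sub>R w + (w \<bullet> z) *\<^sub>R w')) + norm ((- c' / (1 + c)\<^sup>2 * (w \<bullet> z)) *\<^sub>R w)"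
      by (rule norm_triangle_ineq)
    also have "\<dots> \<le> (1 / (1 + c)) * (2 * norm w' * norm w * norm z) + \<bar>c'\<bar> / (1 + c)\<^sup>2 * (norm w * norm w * norm z)"
    proof (rule add_mono)
      have "norm ((w' \<bullet> z) *\<^sub>R w + (w \<bullet> z) *\<^sub>R w') \<le> \<bar>w' \<bullet> z\<bar> * norm w + \<bar>w \<bullet> z\<bar> * norm w'"
        by (metis norm_scaleR norm_triangle_ineq)
      also have "\<dots> \<le> (norm w' * norm z) * norm w + (norm w * norm z) * norm w'"
        by (intro add_mono mult_right_mono Cauchy_Schwarz_ineq2) auto
      also have "\<dots> = 2 * norm w' * norm w * norm z" by (simp add: algebra_simps)
      finally have "norm ((w' \<bullet> z) *\<^sub>R w + (w \<bullet> z) *\<^sub>R w') \<le> 2 * norm w' * norm w * norm z" .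
      thus "norm ((1 / (1 + c)) *\<^sub>R ((w' \<bullet> z) *\<^sub>R w + (w \<bullet> z) *\<^sub>R w')) \<le> (1 / (1 + c)) * (2 * norm w' * norm w * norm z)"
        using cpos by (simp add: divide_right_mono)
    next
      have "norm ((- c' / (1 + c)\<^sup>2 * (w \<bullet> z)) *\<^sub>R w) = \<bar>c'\<bar> / (1 + c)\<^sup>2 * (\<bar>w \<bullet> z\<bar> * norm w)"
        using cpos by (simp add: abs_mult)
      also have "\<dots> \<le> \<bar>c'\<bar> / (1 + c)\<^sup>2 * (norm w * norm w * norm z)"
      proof (rule mult_left_mono)
        have "\<bar>w \<bullet> z\<bar> * norm w \<le> (norm w * norm z) * norm w"
          by (intro mult_right_mono Cauchy_Schwarz_ineq2) auto
        thus "\<bar>w \<bullet> z\<bar> * norm w \<le> norm w * norm w * norm z" by (simp add: algebra_simps)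
      qed simp
      finally show "norm ((- c' / (1 + c)\<^sup>2 * (w \<bullet> z)) *\<^sub>R w) \<le> \<bar>c'\<bar> / (1 + c)\<^sup>2 * (norm w * norm w * norm z)" .
    qed
    also have "\<dots> \<le> (8 / n * V) * norm z + (8 / n * V) * norm z"
    proof (rule add_mono)
      have "(1 / (1 + c)) * (2 * norm w' * norm w * norm z) = (4 / n\<^sup>2) * (norm w' * norm w) * norm z"
        using n2 cpos by (simp add: field_simps)
      also have "\<dots> \<le> (4 / n\<^sup>2) * (2 * V * n) * norm z"
        using wp wn npos V0 by (intro mult_right_mono mult_left_mono mult_mono) auto
      also have "\<dots> = (8 / n * V) * norm z" using npos by (simp add: field_simps power2_eq_square)
      finally show "(1 / (1 + c)) * (2 * norm w' * norm w * norm z) \<le> (8 / n * V) * norm z" .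
    next
      have "\<bar>c'\<bar> / (1 + c)\<^sup>2 * (norm w * norm w * norm z) = \<bar>c'\<bar> * ((1 - c) / (1 + c)) * norm z"
      proof -
        have ww: "norm w * norm w = (1 - c) * (1 + c)" using w2 by (simp add: power2_eq_square)
        show ?thesis unfolding ww using cpos by (simp add: power2_eq_square)
      qed
      also have "\<dots> \<le> (2 * V * n) * (4 / n\<^sup>2) * norm z"
      proof -
        have "4 / n\<^sup>2 = 2 / (1 + c)" unfolding n2 using cpos by (simp add: field_simps)
        moreover have "(1 - c) / (1 + c) \<le> 2 / (1 + c)" using cpos by (intro divide_right_mono) auto
        ultimately have "(1 - c) / (1 + c) \<le> 4 / n\<^sup>2" by simp
        moreover have "(1 - c) / (1 + c) \<ge> 0" using cle cpos by simp
        ultimately show ?thesis using hc by (intro mult_right_mono mult_mono) auto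
      qed
      also have "\<dots> = (8 / n * V) * norm z" using npos by (simp add: field_simps power2_eq_square)
      finally show "\<bar>c'\<bar> / (1 + c)\<^sup>2 * (norm w * norm w * norm z) \<le> (8 / n * V) * norm z" .
    qed
    also have "\<dots> = (16 / n * V) * norm z" by simp
    finally show ?thesis .
  qed
  have "matnorm3 D0 \<le> 16 / n * V"
    unfolding matnorm3_def by (rule onorm_le) (rule bound)
  thus ?thesis using dP n_def x_def y_def by blast
qed

theorem lemmaB1:
  "\<exists>C>0. \<forall>(N::nat) (x::nat \<Rightarrow> real \<Rightarrow> real^3) (v::nat \<Rightarrow> real \<Rightarrow> real^3)
      (T::real set) (Vmax::real) i j t.
      is_interval T \<and> (\<exists>a b. a < b \<and> a \<in> T \<and> b \<in> T) \<and> 0 \<le> Vmax \<and>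
      (\<forall>k\<in>{1..N}. \<forall>s\<in>T. (x k has_vector_derivative v k s) (at s within T)) \<and>
      (\<forall>k\<in>{1..N}. \<forall>s\<in>T. norm (x k s) = 1 \<and> v k s \<bullet> x k s = 0 \<and> norm (v k s) \<le> Vmax) \<and>
      (\<forall>k\<in>{1..N}. \<forall>l\<in>{1..N}. \<forall>s\<in>T. x k s + x l s \<noteq> 0) \<and>
      i \<in> {1..N} \<and> j \<in> {1..N} \<and> t \<in> T
      \<longrightarrow> (\<exists>D. ((\<lambda>s. Pmat (x i s) (x j s)) has_vector_derivative D) (at t within T)) \<and>
          (\<forall>D. ((\<lambda>s. Pmat (x i s) (x j s)) has_vector_derivative D) (at t within T)
               \<longrightarrow> matnorm3 D \<le> C / norm (x i t + x j t) * Vmax)"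
proof (rule exI[of _ 16], rule conjI, simp, intro allI impI)
  fix N :: nat and x v :: "nat \<Rightarrow> real \<Rightarrow> real^3" and T :: "real set" and Vmax :: real and i j :: nat and t :: real
  assume H: "is_interval T \<and> (\<exists>a b. a < b \<and> a \<in> T \<and> b \<in> T) \<and> 0 \<le> Vmax \<and>
      (\<forall>k\<in>{1..N}. \<forall>s\<in>T. (x k has_vector_derivative v k s) (at s within T)) \<and>
      (\<forall>k\<in>{1..N}. \<forall>s\<in>T. norm (x k s) = 1 \<and> v k s \<bullet> x k s = 0 \<and> norm (v k s) \<le> Vmax) \<and>
      (\<forall>k\<in>{1..N}. \<forall>l\<in>{1..N}. \<forall>s\<in>T. x k s + x l s \<noteq> 0) \<and>
      i \<in> {1..N} \<and> j \<in> {1..N} \<and> t \<in> T"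
  then obtain a b where ab: "a < b" "a \<in> T" "b \<in> T" by blast
  have nb: "at t within T \<noteq> bot" using limpt_interval[OF _ ab] H by blast
  obtain D0 where D0: "((\<lambda>s. Pmat (x i s) (x j s)) has_vector_derivative D0) (at t within T)"
    "matnorm3 D0 \<le> 16 / norm (x i t + x j t) * Vmax"
    using key[of "x i" "v i t" t T "x j" "v j t" Vmax] H by blast
  have "D = D0" if "((\<lambda>s. Pmat (x i s) (x j s)) has_vector_derivative D) (at t within T)" for D
    using vector_derivative_unique_within[OF nb that D0(1)] by blast
  thus "(\<exists>D. ((\<lambda>s. Pmat (x i s) (x j s)) has_vector_derivative D) (at t within T)) \<and>
          (\<forall>D. ((\<lambda>s. Pmat (x i s) (x j s)) has_vector_derivative D) (at t within T)
               \<longrightarrow> matnorm3 D \<le> 16 / norm (x i t + x j t) * Vmax)" using D0 by blast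
qed

end
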